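(* Let $t\ge1$ and $n=t+1$. The gadget $\mathtt{SecScalarMult}$ defined below is $t$-SNI secure. $\mathtt{SecScalarMult}$ takes as input a Boolean sharing $(\mathbf{x}_i)_{1\le i\le n}$ of a vector $\mathbf{x}\in\mathbb{F}_q^l$ and a multiplicative sharing $(p_i)_{1\le i\le n}$ of a coefficient $p\in\mathbb{F}_q^*$, and outputs a Boolean sharing $(\mathbf{y}_i)$ of $p\cdot\mathbf{x}$, computed as follows: set $(\mathbf{y}_i):=(\mathbf{x}_i)$; for $j=1,\dots,n$: for $k=1,\dots,l$: set $\mathbf{y}[k]_i := p_j\cdot\mathbf{y}[k]_i$ for every $i$, then set $(\mathbf{y}[k]_i):=\mathtt{Refresh}((\mathbf{y}[k]_i))$. Return $(\mathbf{y}_i)$.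
   Context: A Boolean sharing of $x\in\mathbb{F}_q$ is a tuple $(x_1,\dots,x_n)$ with $x=x_1+\cdots+x_n$ (field addition); vectors are shared coordinate-wise, and $\mathbf{v}[k]$ is the $k$-th coordinate. A multiplicative sharing of $p\in\mathbb{F}_q^*$ is $(p_1,\dots,p_n)\in(\mathbb{F}_q^* )^n$ with $p=p_1\cdots p_n$. $\mathtt{Refresh}((x_i))$: set $y_i:=x_i$; for $i=2,\dots,n$: sample $r$ uniformly from $\mathbb{F}_q$, set $y_1:=y_1+r$ and $y_i:=y_i-r$; return $(y_i)$. Probing model: an adversary may place probes on intermediate values (internal wires) of a gadget and on its output shares. A gadget with one output sharing and some input sharings is $t$-NI (resp. $t$-SNI) secure if any set of at most $t_1$ probes on internal wires and $t_2$ probes on output shares, with $t_1+t_2\le t$, can be perfectly simulated using at most $t_1+t_2$ (resp. $t_1$) shares of each of its input sharings. *)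

theory Defs
  imports "HOL-Probability.Probability"
begin

text \<open>Share indices and vector coordinates are 1-based: shares i in {1..n},
  coordinates k in {1..l}.  A Boolean sharing of a vector is
  x :: nat => nat => 'a, where x i is the i-th share (a vector) and x i k its
  k-th coordinate.\<close>

text \<open>Refresh, with its randomness rr m (m = 2..n) supplied explicitly.\<close>
definition refresh_out :: "nat \<Rightarrow> (nat \<Rightarrow> 'a::field) \<Rightarrow> (nat \<Rightarrow> 'a) \<Rightarrow> nat \<Rightarrow> 'a" where
  "refresh_out n z rr i = (if i = 1 then z 1 + (\<Sum>m\<in>{2..n}. rr m) else z i - rr i)"

text \<open>Randomness of SecScalarMult: r (j,k,m) is the value sampled in the Refresh
  performed at outer iteration j, coordinate k, inner loop index m.\<close>
definition ssm_rand_idx :: "nat \<Rightarrow> nat \<Rightarrow> (nat \<times> nat \<times> nat) set" where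
  "ssm_rand_idx n l = {1..n} \<times> {1..l} \<times> {2..n}"

definition ssm_rand :: "nat \<Rightarrow> nat \<Rightarrow> (nat \<times> nat \<times> nat \<Rightarrow> 'a::finite) pmf" where
  "ssm_rand n l = Pi_pmf (ssm_rand_idx n l) undefined (\<lambda>_. pmf_of_set UNIV)"

text \<open>State of coordinate k of the sharing y after j outer iterations.\<close>
fun ssm_state :: "nat \<Rightarrow> (nat \<Rightarrow> nat \<Rightarrow> 'a::field) \<Rightarrow> (nat \<Rightarrow> 'a) \<Rightarrow> (nat \<times> nat \<times> nat \<Rightarrow> 'a)
    \<Rightarrow> nat \<Rightarrow> nat \<Rightarrow> nat \<Rightarrow> 'a" where
  "ssm_state n x p r k 0 i = x i k"
| "ssm_state n x p r k (Suc j) i =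
     refresh_out n (\<lambda>i'. p (Suc j) * ssm_state n x p r k j i') (\<lambda>m. r (Suc j, k, m)) i"

text \<open>Internal wires of SecScalarMult:
  WX i k: input share coordinate x_i[k];  WP j: input share p_j;
  WMul j k i: p_j * y[k]_i (value after multiplication at iteration (j,k));
  WRnd j k m: the random r sampled at step m of that Refresh;
  WAcc j k m: the value of y_1 after step m of that Refresh;
  WSub j k m: the value y_m - r at step m of that Refresh.\<close>
datatype wire = WX nat nat | WP nat | WMul nat nat nat | WRnd nat nat nat
  | WAcc nat nat nat | WSub nat nat nat

fun ssm_valid_wire :: "nat \<Rightarrow> nat \<Rightarrow> wire \<Rightarrow> bool" where
  "ssm_valid_wire n l (WX i k) = (i \<in> {1..n} \<and> k \<in> {1..l})"
| "ssm_valid_wire n l (WP j) = (j \<in> {1..n})"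
| "ssm_valid_wire n l (WMul j k i) = (j \<in> {1..n} \<and> k \<in> {1..l} \<and> i \<in> {1..n})"
| "ssm_valid_wire n l (WRnd j k m) = (j \<in> {1..n} \<and> k \<in> {1..l} \<and> m \<in> {2..n})"
| "ssm_valid_wire n l (WAcc j k m) = (j \<in> {1..n} \<and> k \<in> {1..l} \<and> m \<in> {2..n})"
| "ssm_valid_wire n l (WSub j k m) = (j \<in> {1..n} \<and> k \<in> {1..l} \<and> m \<in> {2..n})"

definition ssm_wires :: "nat \<Rightarrow> nat \<Rightarrow> wire set" where
  "ssm_wires n l = {w. ssm_valid_wire n l w}"

fun ssm_wire_val :: "nat \<Rightarrow> (nat \<Rightarrow> nat \<Rightarrow> 'a::field) \<Rightarrow> (nat \<Rightarrow> 'a) \<Rightarrow> (nat \<times> nat \<times> nat \<Rightarrow> 'a)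
    \<Rightarrow> wire \<Rightarrow> 'a" where
  "ssm_wire_val n x p r (WX i k) = x i k"
| "ssm_wire_val n x p r (WP j) = p j"
| "ssm_wire_val n x p r (WMul j k i) = p j * ssm_state n x p r k (j - 1) i"
| "ssm_wire_val n x p r (WRnd j k m) = r (j, k, m)"
| "ssm_wire_val n x p r (WAcc j k m) =
     p j * ssm_state n x p r k (j - 1) 1 + (\<Sum>m'\<in>{2..m}. r (j, k, m'))"
| "ssm_wire_val n x p r (WSub j k m) = p j * ssm_state n x p r k (j - 1) m - r (j, k, m)"

definition ssm_out :: "nat \<Rightarrow> nat \<Rightarrow> (nat \<Rightarrow> nat \<Rightarrow> 'a::field) \<Rightarrow> (nat \<Rightarrow> 'a)
    \<Rightarrow> (nat \<times> nat \<times> nat \<Rightarrow> 'a) \<Rightarrow> nat \<Rightarrow> nat \<Rightarrow> 'a" where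
  "ssm_out n l x p r i = (\<lambda>k. if k \<in> {1..l} then ssm_state n x p r k n i else 0)"

text \<open>Joint distribution of the values observed by probes on the internal wires P
  and on the output shares Q (an output probe sees a whole output share).\<close>
definition ssm_leak :: "nat \<Rightarrow> nat \<Rightarrow> wire set \<Rightarrow> nat set \<Rightarrow> (nat \<Rightarrow> nat \<Rightarrow> 'a::{field,finite})
    \<Rightarrow> (nat \<Rightarrow> 'a) \<Rightarrow> ((wire \<Rightarrow> 'a) \<times> (nat \<Rightarrow> nat \<Rightarrow> 'a)) pmf" where
  "ssm_leak n l P Q x p = map_pmf
     (\<lambda>r. (\<lambda>w. if w \<in> P then ssm_wire_val n x p r w else 0,
           \<lambda>i. if i \<in> Q then ssm_out n l x p r i else (\<lambda>_. 0)))
     (ssm_rand n l)"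

definition t_SNI ::
  "nat \<Rightarrow> nat \<Rightarrow> 'w set \<Rightarrow> ((nat \<Rightarrow> 'u) \<Rightarrow> (nat \<Rightarrow> 'v) \<Rightarrow> bool)
   \<Rightarrow> ('w set \<Rightarrow> nat set \<Rightarrow> (nat \<Rightarrow> 'u) \<Rightarrow> (nat \<Rightarrow> 'v) \<Rightarrow> 'obs pmf) \<Rightarrow> bool" where
  "t_SNI t n W valid leak \<longleftrightarrow>
     (\<forall>P Q. P \<subseteq> W \<longrightarrow> Q \<subseteq> {1..n} \<longrightarrow> finite P \<longrightarrow> card P + card Q \<le> t \<longrightarrow>
        (\<exists>I J. I \<subseteq> {1..n} \<and> J \<subseteq> {1..n} \<and> card I \<le> card P \<and> card J \<le> card P \<and>
           (\<exists>Sim :: (nat \<Rightarrow> 'u) \<Rightarrow> (nat \<Rightarrow> 'v) \<Rightarrow> 'obs pmf.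
              \<forall>x p. valid x p \<longrightarrow> leak P Q x p = Sim (restrict x I) (restrict p J))))"

definition ssm_valid :: "nat \<Rightarrow> (nat \<Rightarrow> nat \<Rightarrow> 'a::field) \<Rightarrow> (nat \<Rightarrow> 'a) \<Rightarrow> bool" where
  "ssm_valid n x p \<longleftrightarrow> (\<forall>j\<in>{1..n}. p j \<noteq> 0)"

end

theory Submission imports Defs begin

fun iterw :: "wire \<Rightarrow> nat" where
  "iterw (WX i k) = 0" | "iterw (WP j) = j" | "iterw (WMul j k i) = j"
| "iterw (WRnd j k m) = j" | "iterw (WAcc j k m) = j" | "iterw (WSub j k m) = j"

fun colw :: "wire \<Rightarrow> nat set" where
  "colw (WX i k) = {i}" | "colw (WP j) = {}" | "colw (WMul j k i) = {i}"
| "colw (WRnd j k m) = {}" | "colw (WAcc j k m) = {1}" | "colw (WSub j k m) = {m}"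

definition probed :: "wire set \<Rightarrow> nat \<Rightarrow> bool" where
  "probed P j = (j \<in> iterw ` P)"

definition allp :: "wire set \<Rightarrow> nat \<Rightarrow> bool" where
  "allp P j = (\<forall>j'\<in>{1..j}. probed P j')"

definition Iset :: "wire set \<Rightarrow> nat set" where
  "Iset P = \<Union> (colw ` {w\<in>P. allp P (iterw w)})"

definition Jset :: "wire set \<Rightarrow> nat set" where
  "Jset P = iterw ` P - {0}"

lemma sum_split1:
  assumes "(n::nat) \<ge> 1"
  shows "sum f {1..n} = f 1 + sum f {2..n}"
  using sum.atLeast_Suc_atMost[of 1 n f] assms by (simp add: numeral_2_eq_2)

lemma refresh_sum:
  assumes "n \<ge> 1"
  shows "(\<Sum>i\<in>{1..n}. refresh_out n z rr i) = (\<Sum>i\<in>{1..n}. z i)"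
proof -
  note e = sum_split1[OF assms]
  have "(\<Sum>i\<in>{1..n}. refresh_out n z rr i) = refresh_out n z rr 1 + (\<Sum>i\<in>{2..n}. refresh_out n z rr i)"
    by (rule e)
  also have "\<dots> = z 1 + (\<Sum>m\<in>{2..n}. rr m) + (\<Sum>i\<in>{2..n}. z i - rr i)"
    by (simp add: refresh_out_def)
  also have "\<dots> = z 1 + (\<Sum>i\<in>{2..n}. z i)" by (simp add: sum_subtractf)
  also have "\<dots> = (\<Sum>i\<in>{1..n}. z i)" by (rule e[symmetric])
  finally show ?thesis .
qed

lemma state_sum:
  assumes "n \<ge> 1"
  shows "(\<Sum>i\<in>{1..n}. ssm_state n x p r k j i) = (\<Prod>j'\<in>{1..j}. p j') * (\<Sum>i\<in>{1..n}. x i k)"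
proof (induction j)
  case 0 then show ?case by simp
next
  case (Suc j)
  have "(\<Sum>i\<in>{1..n}. ssm_state n x p r k (Suc j) i) = (\<Sum>i\<in>{1..n}. p (Suc j) * ssm_state n x p r k j i)"
    using refresh_sum[OF assms] by simp
  also have "\<dots> = p (Suc j) * (\<Sum>i\<in>{1..n}. ssm_state n x p r k j i)" by (simp add: sum_distrib_left)
  also have "\<dots> = (\<Prod>j'\<in>{1..Suc j}. p j') * (\<Sum>i\<in>{1..n}. x i k)"
    using Suc by (simp add: prod.nat_ivl_Suc' mult_ac)
  finally show ?case .
qed

lemma state_m:
  assumes "m \<noteq> 1"
  shows "ssm_state n x p r k (Suc j) m = p (Suc j) * ssm_state n x p r k j m - r (Suc j, k, m)"
  using assms by (simp add: refresh_out_def)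

locale ssm_pair =
  fixes n l :: nat and P :: "wire set" and Q :: "nat set" and cs :: nat
    and x x' :: "nat \<Rightarrow> nat \<Rightarrow> 'a::{field,finite}" and p p' :: "nat \<Rightarrow> 'a"
  assumes n1: "n \<ge> 1"
    and Pw: "P \<subseteq> ssm_wires n l"
    and Qn: "Q \<subseteq> {1..n}"
    and csn: "cs \<in> {1..n}" and csP: "cs \<notin> \<Union>(colw ` P)" and csQ: "cs \<notin> Q"
    and unp: "\<exists>j\<in>{1..n}. \<not> probed P j"
    and agI: "\<And>i. i \<in> Iset P \<Longrightarrow> x' i = x i"
    and agJ: "\<And>j. j \<in> Jset P \<Longrightarrow> p' j = p j"
begin

definition Delta :: "nat \<Rightarrow> nat \<Rightarrow> 'a" where
  "Delta k j = (\<Prod>j'\<in>{1..j}. p' j') * (\<Sum>i\<in>{1..n}. x' i k) - (\<Prod>j'\<in>{1..j}. p j') * (\<Sum>i\<in>{1..n}. x i k)"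

fun D :: "nat \<Rightarrow> nat \<Rightarrow> nat \<Rightarrow> 'a" where
  "D k 0 c = x' c k - x c k"
| "D k (Suc j) c = (if probed P (Suc j) then p (Suc j) * D k j c else if c = cs then Delta k (Suc j) else 0)"

definition T :: "(nat \<times> nat \<times> nat \<Rightarrow> 'a) \<Rightarrow> nat \<Rightarrow> nat \<Rightarrow> nat \<Rightarrow> 'a" where
  "T r k j c = ssm_state n x p r k j c + D k j c"

definition sigma :: "(nat \<times> nat \<times> nat \<Rightarrow> 'a) \<Rightarrow> (nat \<times> nat \<times> nat \<Rightarrow> 'a)" where
  "sigma r = (\<lambda>jkm. if jkm \<in> ssm_rand_idx n l then
      (case jkm of (j,k,m) \<Rightarrow> p' j * T r k (j-1) m - T r k j m) else undefined)"

lemma probed_J: "probed P j \<Longrightarrow> j \<ge> 1 \<Longrightarrow> p' j = p j"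
  using agJ by (auto simp: probed_def Jset_def)

lemma D_sum: "(\<Sum>c\<in>{1..n}. D k j c) = Delta k j"
proof (induction j)
  case 0 then show ?case by (simp add: Delta_def sum_subtractf)
next
  case (Suc j)
  show ?case
  proof (cases "probed P (Suc j)")
    case True
    then have pp: "p' (Suc j) = p (Suc j)" using probed_J by auto
    have "(\<Sum>c\<in>{1..n}. D k (Suc j) c) = p (Suc j) * Delta k j"
      using True Suc by (simp add: sum_distrib_left[symmetric])
    also have "\<dots> = Delta k (Suc j)"
      by (simp add: Delta_def prod.nat_ivl_Suc' pp algebra_simps)
    finally show ?thesis .
  next
    case False
    then show ?thesis using csn by (simp add: sum.delta)
  qed
qed

lemma T_sum: "(\<Sum>c\<in>{1..n}. T r k j c) = (\<Prod>j'\<in>{1..j}. p' j') * (\<Sum>i\<in>{1..n}. x' i k)"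
proof -
  have "(\<Sum>c\<in>{1..n}. T r k j c) = (\<Sum>c\<in>{1..n}. ssm_state n x p r k j c) + (\<Sum>c\<in>{1..n}. D k j c)"
    unfolding T_def by (rule sum.distrib)
  also note state_sum[OF n1]
  also note D_sum
  finally show ?thesis by (simp add: Delta_def)
qed

lemma main:
  assumes "k \<in> {1..l}"
  shows "j \<le> n \<Longrightarrow> i \<in> {1..n} \<Longrightarrow> ssm_state n x' p' (sigma r) k j i = T r k j i"
proof (induction j arbitrary: i)
  case 0
  then show ?case by (simp add: T_def)
next
  case (Suc j)
  have sig: "sigma r (Suc j, k, m) = p' (Suc j) * T r k j m - T r k (Suc j) m" if "m \<in> {2..n}" for m
    using that assms Suc.prems by (simp add: sigma_def ssm_rand_idx_def)
  have IH: "ssm_state n x' p' (sigma r) k j c = T r k j c" if "c \<in> {1..n}" for c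
    using Suc that by simp
  note e = sum_split1[OF n1]
  show ?case
  proof (cases "i = 1")
    case True
    have "ssm_state n x' p' (sigma r) k (Suc j) i
        = p' (Suc j) * T r k j 1 + (\<Sum>m\<in>{2..n}. p' (Suc j) * T r k j m - T r k (Suc j) m)"
      using True IH n1 sig by (simp add: refresh_out_def)
    also have "\<dots> = p' (Suc j) * (\<Sum>c\<in>{1..n}. T r k j c) - (\<Sum>m\<in>{2..n}. T r k (Suc j) m)"
      unfolding e by (simp add: sum_subtractf sum_distrib_left algebra_simps)
    also have "p' (Suc j) * (\<Sum>c\<in>{1..n}. T r k j c) = (\<Sum>c\<in>{1..n}. T r k (Suc j) c)"
      unfolding T_sum by (simp add: prod.nat_ivl_Suc' algebra_simps)
    also have "(\<Sum>c\<in>{1..n}. T r k (Suc j) c) - (\<Sum>m\<in>{2..n}. T r k (Suc j) m) = T r k (Suc j) 1"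
      unfolding e by simp
    finally show ?thesis using True by simp
  next
    case False
    then have "i \<in> {2..n}" using Suc.prems by auto
    then show ?thesis using False IH sig Suc.prems by (simp add: refresh_out_def)
  qed
qed


lemma D_inv:
  "(allp P j \<longrightarrow> (\<forall>c\<in>Iset P. D k j c = 0)) \<and> (\<not> allp P j \<longrightarrow> (\<forall>c. c \<noteq> cs \<longrightarrow> D k j c = 0))"
proof (induction j)
  case 0
  then show ?case by (simp add: allp_def agI)
next
  case (Suc j)
  have a: "allp P (Suc j) \<longleftrightarrow> allp P j \<and> probed P (Suc j)"
    by (auto simp add: allp_def atLeastAtMostSuc_conv)
  show ?case using Suc by (auto simp: a)
qed

lemma D_zero_probe:
  assumes "w \<in> P" "iterw w = Suc j" "c \<in> colw w"
  shows "D k j c = 0"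
proof (cases "allp P j")
  case True
  have pr: "probed P (Suc j)" using assms by (force simp: probed_def)
  have "allp P (Suc j)" using True pr by (simp add: allp_def atLeastAtMostSuc_conv)
  then have "c \<in> Iset P" using assms by (auto simp: Iset_def)
  then show ?thesis using D_inv True by blast
next
  case False
  have "c \<noteq> cs" using assms csP by auto
  then show ?thesis using D_inv False by blast
qed

lemma sigma_probed:
  assumes "probed P (Suc j)" "(Suc j, k, m) \<in> ssm_rand_idx n l"
  shows "sigma r (Suc j, k, m) = r (Suc j, k, m)"
proof -
  have pp: "p' (Suc j) = p (Suc j)" using probed_J assms by auto
  have m: "m \<noteq> 1" using assms by (auto simp: ssm_rand_idx_def)
  show ?thesis using assms pp m by (simp add: sigma_def T_def refresh_out_def algebra_simps)
qed

lemma not_allp_n: "\<not> allp P n"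
  using unp by (auto simp: allp_def)

lemma wire_eq:
  assumes "w \<in> P"
  shows "ssm_wire_val n x' p' (sigma r) w = ssm_wire_val n x p r w"
proof -
  have v: "ssm_valid_wire n l w" using assms Pw by (auto simp: ssm_wires_def)
  show ?thesis
  proof (cases w)
    case (WX i k)
    have "allp P 0" by (simp add: allp_def)
    then have "i \<in> Iset P" using assms WX by (force simp: Iset_def)
    then show ?thesis using WX agI by simp
  next
    case (WP j)
    then have "j \<in> Jset P" using v assms by (force simp: Jset_def)
    then show ?thesis using WP agJ by simp
  next
    case (WMul j k i)
    then obtain j0 where j0: "j = Suc j0" using v by (cases j) auto
    have pr: "probed P j" using assms WMul by (force simp: probed_def)
    have "D k j0 i = 0" using D_zero_probe[of w j0 i k] assms WMul j0 by simp
    then show ?thesis using WMul j0 v main[of k j0 i r] probed_J[OF pr] by (simp add: T_def)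
  next
    case (WRnd j k m)
    then obtain j0 where j0: "j = Suc j0" using v by (cases j) auto
    have pr: "probed P j" using assms WRnd by (force simp: probed_def)
    show ?thesis using WRnd j0 v sigma_probed[of j0 k m r] pr by (simp add: ssm_rand_idx_def)
  next
    case (WAcc j k m)
    then obtain j0 where j0: "j = Suc j0" using v by (cases j) auto
    have pr: "probed P j" using assms WAcc by (force simp: probed_def)
    have "D k j0 1 = 0" using D_zero_probe[of w j0 1 k] assms WAcc j0 by simp
    moreover have "(\<Sum>m'\<in>{2..m}. sigma r (j, k, m')) = (\<Sum>m'\<in>{2..m}. r (j, k, m'))"
      using sigma_probed[of j0 k _ r] pr v WAcc j0 by (intro sum.cong) (auto simp: ssm_rand_idx_def)
    ultimately show ?thesis using WAcc j0 v main[of k j0 1 r] probed_J[OF pr] n1 by (simp add: T_def)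
  next
    case (WSub j k m)
    then obtain j0 where j0: "j = Suc j0" using v by (cases j) auto
    have pr: "probed P j" using assms WSub by (force simp: probed_def)
    have "D k j0 m = 0" using D_zero_probe[of w j0 m k] assms WSub j0 by simp
    then show ?thesis using WSub j0 v main[of k j0 m r] probed_J[OF pr]
        sigma_probed[of j0 k m r] pr by (simp add: T_def ssm_rand_idx_def)
  qed
qed

lemma out_eq:
  assumes "i \<in> Q"
  shows "ssm_out n l x' p' (sigma r) i = ssm_out n l x p r i"
proof -
  have i: "i \<in> {1..n}" "i \<noteq> cs" using assms Qn csQ by auto
  have "D k n i = 0" for k using D_inv[of n k] not_allp_n i by blast
  then show ?thesis unfolding ssm_out_def using main[of _ n i r] i by (auto simp: T_def)
qed

lemma r_from_state:
  assumes "(j, k, m) \<in> ssm_rand_idx n l"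
  shows "r (j, k, m) = p j * ssm_state n x p r k (j - 1) m - ssm_state n x p r k j m"
proof -
  obtain j0 where j0: "j = Suc j0" using assms by (cases j) (auto simp: ssm_rand_idx_def)
  have "m \<noteq> 1" using assms by (auto simp: ssm_rand_idx_def)
  then show ?thesis using j0 by (simp add: refresh_out_def)
qed

definition S :: "(nat \<times> nat \<times> nat \<Rightarrow> 'a) set" where
  "S = PiE_dflt (ssm_rand_idx n l) undefined (\<lambda>_. UNIV)"

lemma sigma_S: "sigma ` S \<subseteq> S"
  by (auto simp: S_def PiE_dflt_def sigma_def)

lemma sigma_inj: "inj_on sigma S"
proof (rule inj_onI)
  fix r1 r2 assume r: "r1 \<in> S" "r2 \<in> S" and eq: "sigma r1 = sigma r2"
  have st: "ssm_state n x p r1 k j i = ssm_state n x p r2 k j i"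
    if "k \<in> {1..l}" "j \<le> n" "i \<in> {1..n}" for k j i
  proof -
    have "T r1 k j i = T r2 k j i" using main[OF that(1) that(2,3), of r1] main[OF that(1) that(2,3), of r2] eq by simp
    then show ?thesis by (simp add: T_def)
  qed
  show "r1 = r2"
  proof
    fix jkm :: "nat \<times> nat \<times> nat"
    obtain j k m where jkm: "jkm = (j, k, m)" by (cases jkm) auto
    show "r1 jkm = r2 jkm"
    proof (cases "jkm \<in> ssm_rand_idx n l")
      case True
      then have "k \<in> {1..l}" "j \<le> n" "j - 1 \<le> n" "m \<in> {1..n}" using jkm by (auto simp: ssm_rand_idx_def)
      then show ?thesis using True jkm r_from_state[of j k m r1] r_from_state[of j k m r2] st by simp
    next
      case False
      then show ?thesis using r jkm by (auto simp: S_def PiE_dflt_def)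
    qed
  qed
qed

lemma S_fin: "finite S" and S_ne: "S \<noteq> {}"
proof -
  have fi: "finite (ssm_rand_idx n l)" by (simp add: ssm_rand_idx_def)
  show "finite S" unfolding S_def using fi by (intro finite_PiE_dflt) auto
  show "S \<noteq> {}" unfolding S_def PiE_dflt_def by auto
qed

lemma rand_S: "ssm_rand n l = pmf_of_set S"
  unfolding ssm_rand_def S_def
  by (rule Pi_pmf_of_set) (auto simp: ssm_rand_idx_def)

lemma sigma_pres: "map_pmf sigma (pmf_of_set S) = pmf_of_set S"
  using map_pmf_of_set_inj[OF sigma_inj S_ne S_fin] endo_inj_surj[OF S_fin sigma_S sigma_inj] by simp

lemma leak_eq: "ssm_leak n l P Q x' p' = ssm_leak n l P Q x p"
proof -
  have "ssm_leak n l P Q x' p' = map_pmf (\<lambda>r. (\<lambda>w. if w \<in> P then ssm_wire_val n x' p' r w else 0,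
           \<lambda>i. if i \<in> Q then ssm_out n l x' p' r i else (\<lambda>_. 0))) (map_pmf sigma (pmf_of_set S))"
    unfolding ssm_leak_def rand_S sigma_pres ..
  also have "\<dots> = ssm_leak n l P Q x p"
    unfolding ssm_leak_def rand_S pmf.map_comp o_def
    by (intro pmf.map_cong refl) (auto simp: wire_eq out_eq)
  finally show ?thesis .
qed
end


lemma colw_card: "card (colw w) \<le> 1"
  by (cases w) auto

lemma colw_fin: "finite (colw w)"
  by (cases w) auto

lemma colw_valid: "n \<ge> 1 \<Longrightarrow> ssm_valid_wire n l w \<Longrightarrow> colw w \<subseteq> {1..n}"
  by (cases w) auto

lemma iterw_valid: "ssm_valid_wire n l w \<Longrightarrow> iterw w \<le> n"
  by (cases w) auto

theorem lemma2:
  fixes t n l :: nat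
  assumes "t \<ge> 1" and "n = t + 1"
  shows "t_SNI t n (ssm_wires n l) (ssm_valid n)
           (ssm_leak n l :: wire set \<Rightarrow> nat set \<Rightarrow> (nat \<Rightarrow> nat \<Rightarrow> 'a::{field,finite}) \<Rightarrow> _)"
  unfolding t_SNI_def
proof (intro allI impI)
  fix P :: "wire set" and Q :: "nat set"
  assume PW: "P \<subseteq> ssm_wires n l" and QN: "Q \<subseteq> {1..n}" and fP: "finite P"
    and cP: "card P + card Q \<le> t"
  have n1: "n \<ge> 1" using assms by simp
  have valid: "ssm_valid_wire n l w" if "w \<in> P" for w using PW that by (auto simp: ssm_wires_def)
  have cU: "card (\<Union>(colw ` P)) \<le> card P"
  proof -
    have "card (\<Union>(colw ` P)) \<le> (\<Sum>w\<in>P. card (colw w))" by (rule card_UN_le[OF fP])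
    also have "\<dots> \<le> (\<Sum>w\<in>P. 1)" by (rule sum_mono) (rule colw_card)
    finally show ?thesis by simp
  qed
  have fU: "finite (\<Union>(colw ` P))" using fP colw_fin by auto
  have fQ: "finite Q" using QN finite_subset by blast
  obtain cs where cs: "cs \<in> {1..n}" "cs \<notin> \<Union>(colw ` P)" "cs \<notin> Q"
  proof -
    have "\<not> {1..n} \<subseteq> \<Union>(colw ` P) \<union> Q"
    proof
      assume "{1..n} \<subseteq> \<Union>(colw ` P) \<union> Q"
      then have "card {1..n} \<le> card (\<Union>(colw ` P) \<union> Q)" using fU fQ by (intro card_mono) auto
      also have "\<dots> \<le> card (\<Union>(colw ` P)) + card Q" by (rule card_Un_le)
      finally show False using cU cP assms by simp
    qed
    then show ?thesis using that by blast
  qed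
  have unp: "\<exists>j\<in>{1..n}. \<not> probed P j"
  proof (rule ccontr)
    assume "\<not> ?thesis"
    then have "{1..n} \<subseteq> iterw ` P" by (auto simp: probed_def)
    then have "card {1..n} \<le> card (iterw ` P)" using fP by (intro card_mono) auto
    also have "\<dots> \<le> card P" by (rule card_image_le[OF fP])
    finally show False using cP assms by simp
  qed
  define I where "I = Iset P"
  define J where "J = Jset P"
  have IU: "I \<subseteq> \<Union>(colw ` P)" by (auto simp: I_def Iset_def)
  have I1: "I \<subseteq> {1..n}" using IU colw_valid[OF n1] valid by blast
  have I2: "card I \<le> card P" using card_mono[OF fU IU] cU by simp
  have J1: "J \<subseteq> {1..n}" using iterw_valid valid by (fastforce simp: J_def Jset_def)
  have J2: "card J \<le> card P"
  proof -
    have "card J \<le> card (iterw ` P)" unfolding J_def Jset_def using fP by (intro card_mono) auto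
    also have "\<dots> \<le> card P" by (rule card_image_le[OF fP])
    finally show ?thesis .
  qed
  define Sim where "Sim = (\<lambda>(a :: nat \<Rightarrow> nat \<Rightarrow> 'a) (b :: nat \<Rightarrow> 'a).
     ssm_leak n l P Q (\<lambda>i. if i \<in> I then a i else (\<lambda>_. 0)) (\<lambda>j. if j \<in> J then b j else 1))"
  have "\<forall>x p. ssm_valid n x p \<longrightarrow> ssm_leak n l P Q x p = Sim (restrict x I) (restrict p J)"
  proof (intro allI impI)
    fix x :: "nat \<Rightarrow> nat \<Rightarrow> 'a" and p :: "nat \<Rightarrow> 'a"
    interpret ssm_pair n l P Q cs x "\<lambda>i. if i \<in> I then restrict x I i else (\<lambda>_. 0)"
      p "\<lambda>j. if j \<in> J then restrict p J j else 1"
      by unfold_locales (use n1 PW QN cs unp in \<open>auto simp: I_def J_def\<close>)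
    show "ssm_leak n l P Q x p = Sim (restrict x I) (restrict p J)"
      unfolding Sim_def using leak_eq by simp
  qed
  then show "\<exists>I J. I \<subseteq> {1..n} \<and> J \<subseteq> {1..n} \<and> card I \<le> card P \<and> card J \<le> card P \<and>
           (\<exists>Sim :: (nat \<Rightarrow> nat \<Rightarrow> 'a) \<Rightarrow> (nat \<Rightarrow> 'a) \<Rightarrow> _.
              \<forall>x p. ssm_valid n x p \<longrightarrow> ssm_leak n l P Q x p = Sim (restrict x I) (restrict p J))"
    using I1 I2 J1 J2 by blast
qed
end
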